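(* Write $t=e^u$ and $q=q_1$. Then, as formal Laurent series in $u$, $$\eta(q_1)\,\big(\delta(u)V\big)\big|_{\tau_2=\tau_3=\cdots=0}$$ equals the Laurent expansion at $u=0$ of $F(e^u)$, where $\delta(u):=u^{-1}+(2\pi i)^{-1}\sum_{n\ge1}\frac{u^n}{n!}\frac{\partial}{\partial\tau_n}$.
   Context: $q_r=e^{2\pi i\tau_r}$, $q_r^a=e^{2\pi ia\tau_r}$, $0<|q_1|<1$. $\xi(s)=\sum_{n\ge1}(n-\tfrac12)^{-s}=(2^s-1)\zeta(s)$ (analytically continued). $\eta(q)=q^{1/24}\prod_{m\ge1}(1-q^m)$. For a partition $\lambda$ with Frobenius coordinates $(m_1,\ldots,m_p|n_1,\ldots,n_p)$ ($p=\#\{i:\lambda_i\ge i\}$, $m_i=\lambda_i-i$, $n_i=\lambda'_i-i$), $p_r(\lambda)=\sum_j(m_j+\tfrac12)^r+(-1)^{r+1}(n_j+\tfrac12)^r$. $V(\tau_1,\tau_2,\ldots)=\prod_{r\ge1,\,r\text{ odd}}q_r^{-\xi(-r)}\sum_\lambda\prod_{r\ge1}q_r^{p_r(\lambda)}$. $\langle f\rangle_q=\sum_\lambda f(\lambda)q^{|\lambda|}/\sum_\lambda q^{|\lambda|}$. $F(t)=\langle\sum_{i\ge1}t^{\lambda_i-i+1/2}\rangle_{q_1}$, defined by the convergent series for $|t|>1$; since $\sum_{i\ge1}t^{-i+1/2}=(t^{1/2}-t^{-1/2})^{-1}$ there, $F$ is continued to a neighbourhood of $t=1$ by $F(t)=(t^{1/2}-t^{-1/2})^{-1}+\langle\sum_{i\ge1}(t^{\lambda_i-i+1/2}-t^{-i+1/2})\rangle_{q_1}$,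 with $t^{1/2}=e^{u/2}$. *)

theory Defs
  imports "HOL-Complex_Analysis.Complex_Analysis"
begin

text \<open>Bernoulli numbers via the generating function z/(e^z - 1) (convention B_1 = -1/2).\<close>
definition bernoulli_num :: "nat \<Rightarrow> real" where
  "bernoulli_num k = fact k * fps_nth (inverse (fps_shift 1 (fps_exp (1::real) - 1))) k"

text \<open>zeta(-r) = - B_(r+1)/(r+1) for r >= 1 (value of the analytic continuation).\<close>
definition zeta_neg :: "nat \<Rightarrow> real" where
  "zeta_neg r = - bernoulli_num (r + 1) / real (r + 1)"

definition xi_neg :: "nat \<Rightarrow> real" where
  "xi_neg r = (2 powr (- real r) - 1) * zeta_neg r"

definition partitions :: "nat list set" where
  "partitions = {xs. sorted_wrt (\<ge>) xs \<and> 0 \<notin> set xs}"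

definition part :: "nat list \<Rightarrow> nat \<Rightarrow> nat" where
  "part lam i = (if 1 \<le> i \<and> i \<le> length lam then lam ! (i - 1) else 0)"

definition conj_part :: "nat list \<Rightarrow> nat \<Rightarrow> nat" where
  "conj_part lam i = card {j \<in> {1..length lam}. part lam j \<ge> i}"

definition psize :: "nat list \<Rightarrow> nat" where
  "psize lam = sum_list lam"

definition frob_rank :: "nat list \<Rightarrow> nat" where
  "frob_rank lam = card {i \<in> {1..length lam}. part lam i \<ge> i}"

definition p_fun :: "nat \<Rightarrow> nat list \<Rightarrow> real" where
  "p_fun r lam = (\<Sum>j=1..frob_rank lam.
      (real (part lam j) - real j + 1/2) ^ r
      + (-1) ^ (r + 1) * (real (conj_part lam j) - real j + 1/2) ^ r)"

definition qexp :: "complex \<Rightarrow> complex" where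
  "qexp \<tau> = exp (2 * pi * \<i> * \<tau>)"

definition qbracket :: "complex \<Rightarrow> (nat list \<Rightarrow> complex) \<Rightarrow> complex" where
  "qbracket q f = (\<Sum>\<^sub>\<infinity>lam\<in>partitions. f lam * q ^ psize lam)
                  / (\<Sum>\<^sub>\<infinity>lam\<in>partitions. q ^ psize lam)"

text \<open>F(e^u) near u = 0, via the continuation in the context, with t^(1/2) = e^(u/2).\<close>
definition F_exp :: "complex \<Rightarrow> complex \<Rightarrow> complex" where
  "F_exp \<tau>1 u = 1 / (exp (u/2) - exp (-u/2))
     + qbracket (qexp \<tau>1) (\<lambda>lam. \<Sum>\<^sub>\<infinity>i\<in>{1::nat..}.
          exp (u * (of_nat (part lam i) - of_nat i + 1/2)) - exp (u * (- of_nat i + 1/2)))"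

definition eta :: "complex \<Rightarrow> complex" where
  "eta \<tau>1 = exp (2 * pi * \<i> * \<tau>1 / 24) * (\<Prod>m. (1 - qexp \<tau>1 ^ Suc m))"

text \<open>V(tau_1,0,0,...): all factors with r >= 2 equal e^0 = 1.\<close>
definition V1 :: "complex \<Rightarrow> complex" where
  "V1 \<tau>1 = (\<Sum>\<^sub>\<infinity>lam\<in>partitions.
     exp (2 * pi * \<i> * (- xi_neg 1) * \<tau>1) * exp (2 * pi * \<i> * p_fun 1 lam * \<tau>1))"

text \<open>For n >= 2, V(tau_1,0,..,0,eps,0,..) (eps in slot n) as a formal power series in eps:
  the summand for lambda is q_1^(-xi(-1)) q_1^(p_1) * e^(2 pi i eps (p_n - [n odd] xi(-n))),
  summed coefficientwise.\<close>
definition V_line :: "complex \<Rightarrow> nat \<Rightarrow> complex fps" where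
  "V_line \<tau>1 n = Abs_fps (\<lambda>k. \<Sum>\<^sub>\<infinity>lam\<in>partitions. fps_nth
      (fps_const (exp (2 * pi * \<i> * (- xi_neg 1) * \<tau>1) * exp (2 * pi * \<i> * p_fun 1 lam * \<tau>1))
       * fps_exp (2 * pi * \<i> * (p_fun n lam - (if odd n then xi_neg n else 0)))) k)"

text \<open>partial V / partial tau_n at (tau_1, 0, 0, ...).\<close>
definition dV :: "nat \<Rightarrow> complex \<Rightarrow> complex" where
  "dV n \<tau>1 = (if n = 1 then deriv V1 \<tau>1 else fps_nth (V_line \<tau>1 n) 1)"

text \<open>eta(q_1) * (delta(u) V)|_{tau_2=tau_3=...=0} as a formal Laurent series in u.\<close>
definition delta_V :: "complex \<Rightarrow> complex fls" where
  "delta_V \<tau>1 = fls_const (eta \<tau>1 * V1 \<tau>1) * fls_X_inv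
     + fps_to_fls (Abs_fps (\<lambda>n. if n = 0 then 0
          else eta \<tau>1 * dV n \<tau>1 / (2 * pi * \<i> * fact n)))"

end

theory Submission
  imports Defs
begin

lemma part_mono:
  assumes "lam \<in> partitions" "1 \<le> i" "i \<le> j"
  shows "part lam j \<le> part lam i"
proof (cases "j \<le> length lam")
  case True
  have s: "sorted_wrt (\<ge>) lam" using assms(1) by (simp add: partitions_def)
  show ?thesis
  proof (cases "i = j")
    case False
    then have "i - 1 < j - 1" using assms by linarith
    moreover have "j - 1 < length lam" using True assms by linarith
    ultimately have "lam ! (i - 1) \<ge> lam ! (j - 1)"
      using s by (simp add: sorted_wrt_iff_nth_less)
    then show ?thesis using True assms by (simp add: part_def)
  qed simp
next
  case False
  then show ?thesis by (simp add: part_def)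
qed

lemma part_pos:
  assumes "lam \<in> partitions" "1 \<le> i" "i \<le> length lam"
  shows "part lam i \<ge> 1"
proof -
  have "lam ! (i - 1) \<in> set lam" using assms by simp
  moreover have "0 \<notin> set lam" using assms(1) by (simp add: partitions_def)
  ultimately have "lam ! (i - 1) \<noteq> 0" by metis
  then show ?thesis using assms by (simp add: part_def)
qed

lemma part_zero: "\<not> (1 \<le> i \<and> i \<le> length lam) \<Longrightarrow> part lam i = 0"
  by (auto simp: part_def)

lemma part_ge_imp:
  "1 \<le> k \<Longrightarrow> k \<le> part lam i \<Longrightarrow> 1 \<le> i \<and> i \<le> length lam"
  by (auto simp: part_def split: if_splits)

lemma downclosed_eq:
  fixes S :: "nat set"
  assumes "finite S" "\<And>j. j \<in> S \<Longrightarrow> 1 \<le> j"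
    "\<And>i j. j \<in> S \<Longrightarrow> 1 \<le> i \<Longrightarrow> i \<le> j \<Longrightarrow> i \<in> S"
  shows "S = {1..card S}"
proof (cases "S = {}")
  case True then show ?thesis by simp
next
  case False
  define m where "m = Max S"
  have "m \<in> S" using False assms(1) m_def by simp
  have "S = {1..m}"
  proof
    show "S \<subseteq> {1..m}" using assms(1,2) m_def by auto
    show "{1..m} \<subseteq> S" using assms(3) \<open>m \<in> S\<close> by auto
  qed
  then show ?thesis by simp
qed

lemma conj_part_iff:
  assumes "lam \<in> partitions" "1 \<le> k" "1 \<le> i"
  shows "i \<le> conj_part lam k \<longleftrightarrow> k \<le> part lam i"
proof -
  define S where "S = {j \<in> {1..length lam}. part lam j \<ge> k}"
  have "S = {1..card S}"
  proof (rule downclosed_eq)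
    show "finite S" by (simp add: S_def)
    show "\<And>j. j \<in> S \<Longrightarrow> 1 \<le> j" by (simp add: S_def)
    fix i j assume "j \<in> S" "1 \<le> i" "i \<le> j"
    then show "i \<in> S" using part_mono[OF assms(1), of i j] by (auto simp: S_def)
  qed
  then obtain n where Sn: "S = {1..n}" by blast
  have "conj_part lam k = card S" unfolding conj_part_def S_def by (rule refl)
  then have "i \<le> conj_part lam k \<longleftrightarrow> i \<in> S" using Sn assms by simp
  also have "\<dots> \<longleftrightarrow> k \<le> part lam i"
    using assms part_ge_imp[of k lam i] by (auto simp: S_def)
  finally show ?thesis .
qed

lemma frob_rank_iff:
  assumes "lam \<in> partitions" "1 \<le> i"
  shows "i \<le> frob_rank lam \<longleftrightarrow> i \<le> part lam i"
proof -
  define S where "S = {i \<in> {1..length lam}. part lam i \<ge> i}"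
  have "S = {1..card S}"
  proof (rule downclosed_eq)
    show "finite S" by (simp add: S_def)
    show "\<And>j. j \<in> S \<Longrightarrow> 1 \<le> j" by (simp add: S_def)
    fix i j assume "j \<in> S" "1 \<le> i" "i \<le> j"
    then show "i \<in> S" using part_mono[OF assms(1), of i j] by (auto simp: S_def)
  qed
  then obtain n where Sn: "S = {1..n}" by blast
  have "frob_rank lam = card S" unfolding frob_rank_def S_def by (rule refl)
  then have "i \<le> frob_rank lam \<longleftrightarrow> i \<in> S" using Sn assms by simp
  also have "\<dots> \<longleftrightarrow> i \<le> part lam i"
    using assms part_ge_imp[of i lam i] by (auto simp: S_def)
  finally show ?thesis .
qed

lemma tele_nat:
  fixes f :: "int \<Rightarrow> 'a::ab_group_add"
  shows "(\<Sum>j\<in>{a..b}. f (int j) - f (int j - 1)) = (if a \<le> b then f (int b) - f (int a - 1) else 0)"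
proof (induction b)
  case 0 then show ?case by (cases a) auto
next
  case (Suc b)
  show ?case
  proof (cases "a \<le> Suc b")
    case True
    then have "{a..Suc b} = insert (Suc b) {a..b}" by auto
    then show ?thesis using Suc True by (cases "a = Suc b") (auto simp: algebra_simps)
  next
    case False then show ?thesis by simp
  qed
qed

lemma frobenius_sum:
  fixes G :: "int \<Rightarrow> 'a::ab_group_add"
  assumes lam: "lam \<in> partitions"
  shows "(\<Sum>i=1..length lam. G (int (part lam i) - int i) - G (- int i))
       = (\<Sum>k=1..frob_rank lam. G (int (part lam k) - int k) - G (int k - 1 - int (conj_part lam k)))"
proof -
  define gg where "gg = (\<lambda>(i::nat, j::nat). G (int j - int i) - G (int j - int i - 1))"
  define D where "D = Sigma {1..length lam} (\<lambda>i. {1..part lam i})"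
  have finD: "finite D" by (simp add: D_def)
  have row: "(\<Sum>j\<in>{1..part lam i}. gg (i, j)) = G (int (part lam i) - int i) - G (- int i)" for i
    using tele_nat[of "\<lambda>x. G (x - int i)" 1 "part lam i"]
    by (cases "part lam i") (auto simp: gg_def algebra_simps)
  have "(\<Sum>i=1..length lam. G (int (part lam i) - int i) - G (- int i))
      = (\<Sum>i=1..length lam. \<Sum>j=1..part lam i. gg (i, j))"
    by (simp only: row)
  also have "\<dots> = sum gg D"
    unfolding D_def using sum.Sigma[of "{1..length lam}" "\<lambda>i. {1..part lam i}" "\<lambda>i j. gg (i, j)"]
    by simp
  also have "\<dots> = (\<Sum>k\<in>(\<lambda>(i,j). min i j) ` D. sum gg {x \<in> D. (\<lambda>(i,j). min i j) x = k})"
    by (rule sum.image_gen[OF finD])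
  also have "(\<lambda>(i,j). min i j) ` D = {1..frob_rank lam}"
  proof
    show "(\<lambda>(i,j). min i j) ` D \<subseteq> {1..frob_rank lam}"
    proof clarify
      fix i j assume ij: "(i, j) \<in> D"
      then have i1: "1 \<le> i" "i \<le> length lam" and j1: "1 \<le> j" "j \<le> part lam i" by (auto simp: D_def)
      show "min i j \<in> {1..frob_rank lam}"
      proof (cases "i \<le> j")
        case True
        then show ?thesis using i1 j1 frob_rank_iff[OF lam, of i] by auto
      next
        case False
        then have "part lam i \<le> part lam j" using part_mono[OF lam, of j i] j1 by auto
        then show ?thesis using False i1 j1 frob_rank_iff[OF lam, of j] by auto
      qed
    qed
    show "{1..frob_rank lam} \<subseteq> (\<lambda>(i,j). min i j) ` D"
    proof
      fix k assume k: "k \<in> {1..frob_rank lam}"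
      then have "k \<le> part lam k" using frob_rank_iff[OF lam, of k] by auto
      then have "k \<le> length lam" using k part_zero[of k lam] by (cases "k \<le> length lam") auto
      then have "(k, k) \<in> D" using \<open>k \<le> part lam k\<close> k by (auto simp: D_def)
      then show "k \<in> (\<lambda>(i,j). min i j) ` D" by force
    qed
  qed
  also have "(\<Sum>k\<in>{1..frob_rank lam}. sum gg {x \<in> D. (\<lambda>(i,j). min i j) x = k})
      = (\<Sum>k\<in>{1..frob_rank lam}. G (int (part lam k) - int k) - G (int k - 1 - int (conj_part lam k)))"
  proof (rule sum.cong[OF refl])
    fix k assume k: "k \<in> {1..frob_rank lam}"
    define c where "c = conj_part lam k"
    have kp: "k \<le> part lam k" using frob_rank_iff[OF lam, of k] k by auto
    have kl: "k \<le> length lam" using kp k part_zero[of k lam] by (cases "k \<le> length lam") auto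
    have kc: "k \<le> c" using conj_part_iff[OF lam, of k k] kp k by (auto simp: c_def)
    define A where "A = (\<lambda>j. (k, j)) ` {k..part lam k}"
    define B where "B = (\<lambda>i. (i, k)) ` {k+1..c}"
    have eq: "{x \<in> D. (\<lambda>(i,j). min i j) x = k} = A \<union> B"
    proof
      show "{x \<in> D. (\<lambda>(i,j). min i j) x = k} \<subseteq> A \<union> B"
      proof
        fix x assume x: "x \<in> {x \<in> D. (\<lambda>(i,j). min i j) x = k}"
        obtain i j where xij: "x = (i, j)" by fastforce
        have ij: "(i, j) \<in> D" "min i j = k" using x xij by auto
        then have i1: "1 \<le> i" "i \<le> length lam" and j1: "1 \<le> j" "j \<le> part lam i" by (auto simp: D_def)
        show "x \<in> A \<union> B" unfolding xij
        proof (cases "i \<le> j")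
          case True
          then show "(i, j) \<in> A \<union> B" using ij j1 by (auto simp: A_def xij)
        next
          case False
          then have "j = k" using ij by auto
          then have "i \<le> c" using conj_part_iff[OF lam, of k i] j1 i1 k by (auto simp: c_def)
          then show "(i, j) \<in> A \<union> B" using False \<open>j = k\<close> by (auto simp: B_def)
        qed
      qed
      show "A \<union> B \<subseteq> {x \<in> D. (\<lambda>(i,j). min i j) x = k}"
      proof
        fix x assume "x \<in> A \<union> B"
        then show "x \<in> {x \<in> D. (\<lambda>(i,j). min i j) x = k}"
        proof
          assume "x \<in> A"
          then show ?thesis using kl k by (auto simp: A_def D_def)
        next
          assume "x \<in> B"
          then obtain i where i: "x = (i, k)" "k + 1 \<le> i" "i \<le> c" by (auto simp: B_def)
          then have "k \<le> part lam i" using conj_part_iff[OF lam, of k i] k by (auto simp: c_def)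
          then have "i \<le> length lam" using part_zero[of i lam] k i by (cases "i \<le> length lam") auto
          then show ?thesis using i k \<open>k \<le> part lam i\<close> by (auto simp: D_def)
        qed
      qed
    qed
    have disj: "A \<inter> B = {}" by (auto simp: A_def B_def)
    have sA: "sum gg A = G (int (part lam k) - int k) - G (-1)"
    proof -
      have "sum gg A = (\<Sum>j\<in>{k..part lam k}. gg (k, j))"
        unfolding A_def by (subst sum.reindex) (auto simp: inj_on_def)
      also have "\<dots> = G (int (part lam k) - int k) - G (-1)"
        using tele_nat[of "\<lambda>x. G (x - int k)" k "part lam k"] kp
        by (auto simp: gg_def algebra_simps)
      finally show ?thesis .
    qed
    have sB: "sum gg B = G (-1) - G (int k - 1 - int c)"
    proof -
      have "sum gg B = (\<Sum>i\<in>{k+1..c}. gg (i, k))"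
        unfolding B_def by (subst sum.reindex) (auto simp: inj_on_def)
      also have "\<dots> = (\<Sum>i\<in>{k+1..c}. (- G (int k - 1 - int i)) - (- G (int k - 1 - (int i - 1))))"
        by (rule sum.cong) (auto simp: gg_def algebra_simps)
      also have "\<dots> = G (-1) - G (int k - 1 - int c)"
      proof (cases "k + 1 \<le> c")
        case True then show ?thesis using tele_nat[of "\<lambda>x. - G (int k - 1 - x)" "k+1" c] by (simp add: algebra_simps)
      next
        case False then have "c = k" using kc by simp
        then show ?thesis by simp
      qed
      finally show ?thesis .
    qed
    show "sum gg {x \<in> D. (\<lambda>(i,j). min i j) x = k}
        = G (int (part lam k) - int k) - G (int k - 1 - int (conj_part lam k))"
      unfolding eq using disj sA sB
      by (subst sum.union_disjoint) (auto simp: A_def B_def c_def)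
  qed
  finally show ?thesis .
qed

lemma p_fun_rows:
  assumes "lam \<in> partitions"
  shows "p_fun n lam = (\<Sum>i=1..length lam. (real (part lam i) - real i + 1/2)^n - (- real i + 1/2)^n)"
proof -
  define G where "G = (\<lambda>x::int. (real_of_int x + 1/2)^n)"
  have "(\<Sum>i=1..length lam. (real (part lam i) - real i + 1/2)^n - (- real i + 1/2)^n)
     = (\<Sum>i=1..length lam. G (int (part lam i) - int i) - G (- int i))"
    by (simp add: G_def)
  also have "\<dots> = (\<Sum>k=1..frob_rank lam. G (int (part lam k) - int k) - G (int k - 1 - int (conj_part lam k)))"
    by (rule frobenius_sum[OF assms])
  also have "\<dots> = p_fun n lam"
    unfolding p_fun_def
  proof (rule sum.cong[OF refl])
    fix k
    have e0: "real_of_int (int k - 1 - int (conj_part lam k)) + 1/2 = - (real (conj_part lam k) - real k + 1/2)"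
      by simp
    have e2: "G (int k - 1 - int (conj_part lam k)) = (-1)^n * (real (conj_part lam k) - real k + 1/2)^n"
      unfolding G_def e0 by (rule power_minus)
    have e1: "G (int (part lam k) - int k) = (real (part lam k) - real k + 1/2)^n"
      unfolding G_def by simp
    show "G (int (part lam k) - int k) - G (int k - 1 - int (conj_part lam k)) =
         (real (part lam k) - real k + 1 / 2) ^ n + (- 1) ^ (n + 1) * (real (conj_part lam k) - real k + 1 / 2) ^ n"
      unfolding e1 e2 by simp
  qed
  finally show ?thesis ..
qed

lemma length_le_sum_list: "0 \<notin> set xs \<Longrightarrow> length xs \<le> sum_list (xs :: nat list)"
  by (induction xs) auto

lemma length_le_psize: "lam \<in> partitions \<Longrightarrow> length lam \<le> psize lam"
  by (simp add: partitions_def psize_def length_le_sum_list)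

lemma part_le_psize: "part lam i \<le> psize lam"
proof (cases "1 \<le> i \<and> i \<le> length lam")
  case True
  then have "lam ! (i - 1) \<in> set lam" by (auto intro!: nth_mem)
  then show ?thesis using True by (simp add: part_def psize_def member_le_sum_list)
qed (auto simp: part_def)

lemma p_fun_0 [simp]: "p_fun 0 lam = 0"
  by (simp add: p_fun_def)

lemma sum_part_eq_psize: "(\<Sum>i=1..length lam. part lam i) = psize lam"
proof -
  have "(\<Sum>i=1..length lam. part lam i) = (\<Sum>i<length lam. lam ! i)"
    by (rule sum.reindex_bij_witness[of _ Suc "\<lambda>i. i - 1"]) (auto simp: part_def)
  also have "\<dots> = psize lam" by (simp add: psize_def sum_list_sum_nth atLeast0LessThan)
  finally show ?thesis .
qed

lemma p_fun_1: "lam \<in> partitions \<Longrightarrow> p_fun 1 lam = real (psize lam)"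
proof -
  assume lam: "lam \<in> partitions"
  have "p_fun 1 lam = (\<Sum>i=1..length lam. real (part lam i))"
    by (simp add: p_fun_rows[OF lam])
  also have "\<dots> = real (\<Sum>i=1..length lam. part lam i)" by simp
  also have "\<dots> = real (psize lam)" by (simp only: sum_part_eq_psize)
  finally show ?thesis .
qed

lemma p_fun_bound:
  assumes lam: "lam \<in> partitions"
  shows "\<bar>p_fun n lam\<bar> \<le> 2 * real (psize lam) * (real (psize lam) + 1)^n"
proof -
  define s where "s = real (psize lam)"
  have "\<bar>p_fun n lam\<bar> \<le> (\<Sum>i=1..length lam. \<bar>(real (part lam i) - real i + 1/2)^n - (- real i + 1/2)^n\<bar>)"
    unfolding p_fun_rows[OF lam] by (rule sum_abs)
  also have "\<dots> \<le> (\<Sum>i=1..length lam. 2 * (s + 1)^n)"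
  proof (rule sum_mono)
    fix i assume i: "i \<in> {1..length lam}"
    have il: "real i \<le> s" using i length_le_psize[OF lam] by (simp add: s_def)
    have pl: "real (part lam i) \<le> s" using part_le_psize[of lam i] by (simp add: s_def)
    have a1: "\<bar>real (part lam i) - real i + 1/2\<bar> \<le> s + 1" using il pl i by auto
    have a2: "\<bar>- real i + 1/2\<bar> \<le> s + 1" using il i by auto
    have "\<bar>(real (part lam i) - real i + 1/2)^n - (- real i + 1/2)^n\<bar>
        \<le> \<bar>real (part lam i) - real i + 1/2\<bar>^n + \<bar>- real i + 1/2\<bar>^n"
      by (metis abs_triangle_ineq4 power_abs)
    also have "\<dots> \<le> (s+1)^n + (s+1)^n"
      by (intro add_mono power_mono a1 a2) auto
    finally show "\<bar>(real (part lam i) - real i + 1/2)^n - (- real i + 1/2)^n\<bar> \<le> 2 * (s + 1)^n"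
      by simp
  qed
  also have "\<dots> = real (length lam) * (2 * (s+1)^n)" by simp
  also have "\<dots> \<le> s * (2 * (s+1)^n)"
    using length_le_psize[OF lam] by (intro mult_right_mono) (auto simp: s_def)
  finally show ?thesis by (simp add: s_def)
qed

definition Sn :: "nat \<Rightarrow> nat list set" where
  "Sn N = {lam \<in> partitions. \<forall>x\<in>set lam. x \<le> N}"

lemma Sn_sub: "Sn N \<subseteq> partitions" by (auto simp: Sn_def)

lemma Sn_0: "Sn 0 = {[]}"
proof -
  have "lam = []" if "lam \<in> Sn 0" for lam
    using that by (cases lam) (auto simp: Sn_def partitions_def)
  moreover have "[] \<in> Sn 0" by (simp add: Sn_def partitions_def)
  ultimately show ?thesis by blast
qed

lemma psize_Cons [simp]: "psize (a # t) = a + psize t"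
  by (simp add: psize_def)

lemma psize_Nil [simp]: "psize [] = 0"
  by (simp add: psize_def)

lemma Sn_Suc: "Sn (Suc N) = Sn N \<union> (Cons (Suc N)) ` Sn (Suc N)"
proof
  show "Sn (Suc N) \<subseteq> Sn N \<union> (Cons (Suc N)) ` Sn (Suc N)"
  proof
    fix lam assume lam: "lam \<in> Sn (Suc N)"
    show "lam \<in> Sn N \<union> (Cons (Suc N)) ` Sn (Suc N)"
    proof (cases "\<forall>x\<in>set lam. x \<le> N")
      case True then show ?thesis using lam by (auto simp: Sn_def)
    next
      case False
      then obtain x where x: "x \<in> set lam" "x > N" by auto
      then have "x = Suc N" using lam by (auto simp: Sn_def)
      obtain h t where ht: "lam = h # t" using x by (cases lam) auto
      have "h \<ge> x" using lam x ht by (auto simp: Sn_def partitions_def)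
      then have "h = Suc N" using lam ht \<open>x = Suc N\<close> by (auto simp: Sn_def)
      moreover have "t \<in> Sn (Suc N)" using lam ht by (auto simp: Sn_def partitions_def)
      ultimately show ?thesis using ht by auto
    qed
  qed
  show "Sn N \<union> (Cons (Suc N)) ` Sn (Suc N) \<subseteq> Sn (Suc N)"
    by (auto simp: Sn_def partitions_def)
qed

lemma Sn_disj: "Sn N \<inter> (Cons (Suc N)) ` Sn (Suc N) = {}"
  by (auto simp: Sn_def)

lemma partitions_in_Sn: "lam \<in> partitions \<Longrightarrow> lam \<in> Sn (psize lam)"
  by (auto simp: Sn_def psize_def member_le_sum_list)

lemma not_Sn_psize: "lam \<in> partitions \<Longrightarrow> lam \<notin> Sn N \<Longrightarrow> psize lam > N"
  by (auto simp: Sn_def psize_def dest: member_le_sum_list)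

lemma finite_bound_Sn:
  fixes b :: real
  assumes b: "0 \<le> b" "b < 1"
  shows "finite F \<Longrightarrow> F \<subseteq> Sn N \<Longrightarrow> (\<Sum>lam\<in>F. b ^ psize lam) \<le> (\<Prod>m=1..N. 1 / (1 - b^m))"
proof (induction N arbitrary: F)
  case 0
  then have "F \<subseteq> {[]}" by (simp add: Sn_0)
  then have "F = {} \<or> F = {[]}" by auto
  then show ?case by auto
next
  case (Suc N)
  note outerIH = Suc.IH
  define B where "B = (\<Prod>m=1..N. 1 / (1 - b^m))"
  define \<beta> where "\<beta> = b ^ Suc N"
  have "b ^ Suc N \<le> b" using b by (simp add: mult_left_le power_le_one)
  then have \<beta>: "0 \<le> \<beta>" "\<beta> < 1" using b by (auto simp: \<beta>_def)
  have B0: "B \<ge> 0" unfolding B_def using b by (intro prod_nonneg) (auto simp: power_le_one)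
  have "\<forall>F. finite F \<longrightarrow> F \<subseteq> Sn (Suc N) \<longrightarrow> (\<forall>lam\<in>F. psize lam \<le> K) \<longrightarrow>
            (\<Sum>lam\<in>F. b ^ psize lam) \<le> B / (1 - \<beta>)" for K
  proof (induction K)
    case 0
    show ?case
    proof (intro allI impI)
      fix F assume F: "finite F" "F \<subseteq> Sn (Suc N)" "\<forall>lam\<in>F. psize lam \<le> 0"
      have "F \<subseteq> Sn N"
      proof
        fix lam assume "lam \<in> F"
        then have "lam \<in> partitions" "psize lam = 0" using F Sn_sub by auto
        then show "lam \<in> Sn N" using partitions_in_Sn[of lam] by (auto simp: Sn_def)
      qed
      then have "(\<Sum>lam\<in>F. b ^ psize lam) \<le> B" unfolding B_def by (intro outerIH F(1))
      also have "B \<le> B / (1 - \<beta>)" using B0 \<beta> by (simp add: le_divide_eq mult_left_le)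
      finally show "(\<Sum>lam\<in>F. b ^ psize lam) \<le> B / (1 - \<beta>)" .
    qed
  next
    case (Suc K)
    show ?case
    proof (intro allI impI)
      fix F assume F: "finite F" "F \<subseteq> Sn (Suc N)" "\<forall>lam\<in>F. psize lam \<le> Suc K"
      define F1 where "F1 = F \<inter> Sn N"
      define F2' where "F2' = {t. Suc N # t \<in> F}"
      have F2eq: "F - Sn N = Cons (Suc N) ` F2'"
      proof
        show "F - Sn N \<subseteq> Cons (Suc N) ` F2'"
        proof
          fix lam assume "lam \<in> F - Sn N"
          then have "lam \<in> Cons (Suc N) ` Sn (Suc N)" using F Sn_Suc[of N] by auto
          then show "lam \<in> Cons (Suc N) ` F2'" using \<open>lam \<in> F - Sn N\<close> by (auto simp: F2'_def)
        qed
        show "Cons (Suc N) ` F2' \<subseteq> F - Sn N" by (auto simp: F2'_def Sn_def)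
      qed
      have finF2': "finite F2'"
      proof -
        have "F2' \<subseteq> tl ` F" by (force simp: F2'_def)
        then show ?thesis using F(1) finite_surj by blast
      qed
      have F2'sub: "F2' \<subseteq> Sn (Suc N)" using F by (auto simp: F2'_def Sn_def partitions_def)
      have F2'K: "\<forall>t\<in>F2'. psize t \<le> K" using F by (auto simp: F2'_def)
      have "(\<Sum>lam\<in>F. b ^ psize lam) = (\<Sum>lam\<in>F1. b ^ psize lam) + (\<Sum>lam\<in>F - Sn N. b ^ psize lam)"
        unfolding F1_def using F(1) by (rule sum.Int_Diff)
      also have "(\<Sum>lam\<in>F - Sn N. b ^ psize lam) = (\<Sum>t\<in>F2'. b ^ psize (Suc N # t))"
        unfolding F2eq by (subst sum.reindex) (auto simp: inj_on_def)
      also have "\<dots> = \<beta> * (\<Sum>t\<in>F2'. b ^ psize t)"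
        by (simp add: \<beta>_def power_add sum_distrib_left mult.assoc)
      also have "(\<Sum>lam\<in>F1. b ^ psize lam) \<le> B"
        unfolding B_def F1_def using F(1) by (intro outerIH) auto
      also have "(\<Sum>t\<in>F2'. b ^ psize t) \<le> B / (1 - \<beta>)"
        using Suc.IH finF2' F2'sub F2'K by blast
      finally have "(\<Sum>lam\<in>F. b ^ psize lam) \<le> B + \<beta> * (B / (1 - \<beta>))"
        using \<beta> by (simp add: mult_left_mono)
      also have "\<dots> = B / (1 - \<beta>)" using \<beta> by (simp add: field_simps)
      finally show "(\<Sum>lam\<in>F. b ^ psize lam) \<le> B / (1 - \<beta>)" .
    qed
  qed
  then have "(\<Sum>lam\<in>F. b ^ psize lam) \<le> B / (1 - \<beta>)"
    using Suc.prems member_le_sum[of _ F psize] by blast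
  also have "B / (1 - \<beta>) = (\<Prod>m=1..Suc N. 1 / (1 - b^m))"
    by (simp add: B_def \<beta>_def prod.nat_ivl_Suc' divide_inverse mult.commute)
  finally show ?case .
qed


lemma Sn_mono: "N \<le> M \<Longrightarrow> Sn N \<subseteq> Sn M"
  by (auto simp: Sn_def)

lemma prod_bound:
  fixes b :: real
  assumes b: "0 \<le> b" "b < 1"
  shows "(\<Prod>m=1..N. 1 / (1 - b^m)) \<le> exp (1 / (1 - b)^2)"
proof -
  have fac: "1 / (1 - b^m) \<le> exp (b^m / (1 - b))" if m: "m \<ge> 1" for m
  proof -
    define x where "x = b^m"
    have x0: "0 \<le> x" using b by (simp add: x_def)
    have xb: "x \<le> b" using power_decreasing[of 1 m b] b m unfolding x_def by simp
    then have x1: "x < 1" using b by simp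
    have "1 / (1 - x) = 1 + x / (1 - x)" using x1 by (simp add: field_simps)
    also have "\<dots> \<le> exp (x / (1 - x))" by (rule exp_ge_add_one_self)
    also have "x / (1 - x) \<le> x / (1 - b)"
      using x0 xb b by (intro divide_left_mono) auto
    then have "exp (x / (1 - x)) \<le> exp (x / (1 - b))" by simp
    finally show ?thesis by (simp add: x_def)
  qed
  have "(\<Prod>m=1..N. 1 / (1 - b^m)) \<le> (\<Prod>m=1..N. exp (b^m / (1 - b)))"
  proof (rule prod_mono)
    fix m assume "m \<in> {1..N}"
    moreover have "b^m < 1" if "m \<ge> 1" using power_decreasing[of 1 m b] b that by simp
    ultimately show "0 \<le> 1 / (1 - b^m) \<and> 1 / (1 - b^m) \<le> exp (b^m / (1 - b))"
      using fac by auto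
  qed
  also have "\<dots> = exp (\<Sum>m=1..N. b^m / (1 - b))" by (simp add: exp_sum)
  also have "(\<Sum>m=1..N. b^m / (1 - b)) \<le> 1 / (1 - b)^2"
  proof -
    have "(\<Sum>m=1..N. b^m) \<le> (\<Sum>m<Suc N. b^m)"
      using b by (intro sum_mono2) auto
    also have "\<dots> = (1 - b^Suc N) / (1 - b)" using b sum_gp_strict[of b "Suc N"] by (simp del: sum.lessThan_Suc)
    also have "\<dots> \<le> 1 / (1 - b)" using b by (intro divide_right_mono) auto
    finally have "(\<Sum>m=1..N. b^m) / (1 - b) \<le> 1 / (1 - b) / (1 - b)"
      using b by (intro divide_right_mono) auto
    then show ?thesis by (simp add: sum_divide_distrib power2_eq_square)
  qed
  then have "exp (\<Sum>m=1..N. b^m / (1 - b)) \<le> exp (1 / (1 - b)^2)" by simp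
  finally show ?thesis .
qed

lemma finite_sum_bound:
  fixes b :: real
  assumes b: "0 \<le> b" "b < 1" and F: "finite F" "F \<subseteq> partitions"
  shows "(\<Sum>lam\<in>F. b ^ psize lam) \<le> exp (1 / (1 - b)^2)"
proof -
  define M where "M = (\<Sum>lam\<in>F. psize lam)"
  have "F \<subseteq> Sn M"
  proof
    fix lam assume lF: "lam \<in> F"
    then have "psize lam \<le> M" unfolding M_def using F member_le_sum[of lam F psize] by blast
    then show "lam \<in> Sn M" using Sn_mono partitions_in_Sn[of lam] F lF by blast
  qed
  then have "(\<Sum>lam\<in>F. b ^ psize lam) \<le> (\<Prod>m=1..M. 1 / (1 - b^m))"
    using finite_bound_Sn[OF b F(1)] by blast
  also have "\<dots> \<le> exp (1 / (1 - b)^2)" by (rule prod_bound[OF b])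
  finally show ?thesis .
qed

lemma summable_real:
  fixes b :: real
  assumes b: "0 \<le> b" "b < 1"
  shows "(\<lambda>lam. b ^ psize lam) summable_on partitions"
proof (rule nonneg_bdd_above_summable_on)
  show "\<And>x. x \<in> partitions \<Longrightarrow> 0 \<le> b ^ psize x" using b by simp
  show "bdd_above (sum (\<lambda>lam. b ^ psize lam) ` {F. F \<subseteq> partitions \<and> finite F})"
    using finite_sum_bound[OF b] by (auto intro!: bdd_aboveI)
qed

lemma summable_cpx:
  fixes q :: complex
  assumes q: "norm q < 1" and A: "A \<subseteq> partitions"
  shows "(\<lambda>lam. q ^ psize lam) summable_on A"
proof -
  have "(\<lambda>lam. norm q ^ psize lam) summable_on A"
    using summable_real[of "norm q"] q A summable_on_subset by auto
  then have "(\<lambda>lam. norm (q ^ psize lam)) summable_on A" by (simp add: norm_power)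
  then show ?thesis by (simp add: summable_on_iff_abs_summable_on_complex)
qed

definition Pq :: "complex \<Rightarrow> complex" where
  "Pq q = (\<Sum>\<^sub>\<infinity>lam\<in>partitions. q ^ psize lam)"

definition An :: "complex \<Rightarrow> nat \<Rightarrow> complex" where
  "An q N = (\<Sum>\<^sub>\<infinity>lam\<in>Sn N. q ^ psize lam)"

lemma An_0: "An q 0 = 1"
  by (simp add: An_def Sn_0)

lemma An_Suc:
  assumes q: "norm q < 1"
  shows "An q (Suc N) = An q N + q ^ Suc N * An q (Suc N)"
proof -
  have s1: "(\<lambda>lam. q ^ psize lam) summable_on Sn N" using summable_cpx[OF q Sn_sub] .
  have s2: "(\<lambda>lam. q ^ psize lam) summable_on (Cons (Suc N) ` Sn (Suc N))"
    using summable_cpx[OF q] Sn_Suc[of N] Sn_sub by blast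
  have "An q (Suc N) = (\<Sum>\<^sub>\<infinity>lam\<in>Sn N \<union> Cons (Suc N) ` Sn (Suc N). q ^ psize lam)"
    unfolding An_def by (subst Sn_Suc) (rule refl)
  also have "\<dots> = An q N + (\<Sum>\<^sub>\<infinity>lam\<in>Cons (Suc N) ` Sn (Suc N). q ^ psize lam)"
    unfolding An_def by (rule infsum_Un_disjoint[OF s1 s2 Sn_disj])
  also have "(\<Sum>\<^sub>\<infinity>lam\<in>Cons (Suc N) ` Sn (Suc N). q ^ psize lam)
      = (\<Sum>\<^sub>\<infinity>t\<in>Sn (Suc N). q ^ Suc N * q ^ psize t)"
    by (subst infsum_reindex) (simp_all add: inj_on_def o_def power_add mult.assoc)
  also have "\<dots> = q ^ Suc N * An q (Suc N)"
    unfolding An_def by (rule infsum_cmult_right')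
  finally show ?thesis .
qed

lemma An_prod:
  assumes q: "norm q < 1"
  shows "An q N * (\<Prod>m=1..N. (1 - q^m)) = 1"
proof (induction N)
  case 0 then show ?case by (simp add: An_0)
next
  case (Suc N)
  have "An q (Suc N) * (1 - q ^ Suc N) = An q N"
    using An_Suc[OF q, of N] by (simp add: algebra_simps)
  then show ?case using Suc by (simp add: prod.nat_ivl_Suc' mult.assoc[symmetric] mult.commute)
qed

lemma An_tendsto:
  assumes q: "norm q < 1"
  shows "(\<lambda>N. An q N) \<longlonglongrightarrow> Pq q"
proof -
  define a where "a = norm q"
  define c where "c = sqrt a"
  have a: "0 \<le> a" "a < 1" using q by (auto simp: a_def)
  have c: "0 \<le> c" "c < 1" using a by (auto simp: c_def)
  have cc: "c * c = a" using a by (simp add: c_def)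
  define K where "K = (\<Sum>\<^sub>\<infinity>lam\<in>partitions. c ^ psize lam)"
  have sc: "(\<lambda>lam. c ^ psize lam) summable_on partitions" using summable_real[OF c] .
  have bound: "norm (An q N - Pq q) \<le> c ^ N * K" for N
  proof -
    have "Pq q - An q N = (\<Sum>\<^sub>\<infinity>lam\<in>partitions - Sn N. q ^ psize lam)"
      unfolding Pq_def An_def
      by (rule infsum_Diff[OF summable_cpx[OF q order_refl] summable_cpx[OF q Sn_sub] Sn_sub, symmetric])
    then have "norm (An q N - Pq q) = norm (\<Sum>\<^sub>\<infinity>lam\<in>partitions - Sn N. q ^ psize lam)"
      by (simp add: norm_minus_commute)
    also have "\<dots> \<le> (\<Sum>\<^sub>\<infinity>lam\<in>partitions - Sn N. norm (q ^ psize lam))"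
      by (rule norm_infsum_bound) (use summable_cpx[OF q, of "partitions - Sn N"] in \<open>auto simp: summable_on_iff_abs_summable_on_complex\<close>)
    also have "\<dots> \<le> (\<Sum>\<^sub>\<infinity>lam\<in>partitions - Sn N. c ^ N * c ^ psize lam)"
    proof (rule infsum_mono)
      show "(\<lambda>lam. norm (q ^ psize lam)) summable_on partitions - Sn N"
        using summable_cpx[OF q, of "partitions - Sn N"] by (auto simp: summable_on_iff_abs_summable_on_complex)
      show "(\<lambda>lam. c ^ N * c ^ psize lam) summable_on partitions - Sn N"
        by (intro summable_on_cmult_right summable_on_subset[OF sc]) auto
      fix lam assume "lam \<in> partitions - Sn N"
      then have "psize lam > N" using not_Sn_psize by auto
      then have "c ^ psize lam \<le> c ^ N" using c by (intro power_decreasing) auto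
      then have "c ^ psize lam * c ^ psize lam \<le> c ^ N * c ^ psize lam"
        using c by (intro mult_right_mono) auto
      moreover have "norm (q ^ psize lam) = c ^ psize lam * c ^ psize lam"
      proof -
        have "norm (q ^ psize lam) = a ^ psize lam" by (simp add: norm_power a_def)
        also have "\<dots> = (c * c) ^ psize lam" by (simp only: cc)
        also have "\<dots> = c ^ psize lam * c ^ psize lam" by (rule power_mult_distrib)
        finally show ?thesis .
      qed
      ultimately show "norm (q ^ psize lam) \<le> c ^ N * c ^ psize lam" by simp
    qed
    also have "\<dots> = c ^ N * (\<Sum>\<^sub>\<infinity>lam\<in>partitions - Sn N. c ^ psize lam)"
      by (rule infsum_cmult_right') 
    also have "(\<Sum>\<^sub>\<infinity>lam\<in>partitions - Sn N. c ^ psize lam) \<le> K"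
      unfolding K_def using c by (intro infsum_mono_neutral summable_on_subset[OF sc] sc) auto
    then have "c ^ N * (\<Sum>\<^sub>\<infinity>lam\<in>partitions - Sn N. c ^ psize lam) \<le> c ^ N * K"
      using c by (intro mult_left_mono) auto
    finally show ?thesis .
  qed
  have "(\<lambda>N. c ^ N) \<longlonglongrightarrow> 0"
    using c by (intro LIMSEQ_power_zero) auto
  then have lim0: "(\<lambda>N. c ^ N * K) \<longlonglongrightarrow> 0"
    using tendsto_mult_left_zero by blast
  have "(\<lambda>N. An q N - Pq q) \<longlonglongrightarrow> 0"
    by (rule Lim_null_comparison[OF always_eventually lim0]) (use bound in blast)
  then show ?thesis by (rule LIM_zero_cancel)
qed

lemma prod_Suc_shift: "(\<Prod>i\<le>n. f (Suc i)) = (\<Prod>m=1..Suc n. (f m :: 'a::comm_monoid_mult))"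
  by (induction n) (auto simp: prod.nat_ivl_Suc' mult.commute)

lemma euler_prod:
  fixes q :: complex
  assumes q: "norm q < 1"
  shows "Pq q * (\<Prod>m. (1 - q ^ Suc m)) = 1"
proof -
  have "summable (\<lambda>m. norm q * norm q ^ m)"
    by (rule summable_mult[OF summable_geometric]) (use q in auto)
  then have "summable (\<lambda>m. norm ((1 - q ^ Suc m) - 1))" by (simp add: norm_power norm_mult)
  then have "abs_convergent_prod (\<lambda>m. 1 - q ^ Suc m)" by (rule summable_imp_abs_convergent_prod)
  then have cp: "convergent_prod (\<lambda>m. 1 - q ^ Suc m)" by (rule abs_convergent_prod_imp_convergent_prod)
  have l1: "(\<lambda>n. \<Prod>i\<le>n. 1 - q ^ Suc i) \<longlonglongrightarrow> (\<Prod>m. (1 - q ^ Suc m))"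
    by (rule convergent_prod_LIMSEQ[OF cp])
  have l2: "(\<lambda>n. An q (Suc n)) \<longlonglongrightarrow> Pq q"
    using An_tendsto[OF q] by (rule LIMSEQ_Suc)
  have "(\<lambda>n. An q (Suc n) * (\<Prod>i\<le>n. 1 - q ^ Suc i)) \<longlonglongrightarrow> Pq q * (\<Prod>m. (1 - q ^ Suc m))"
    by (intro tendsto_mult l1 l2)
  moreover have "An q (Suc n) * (\<Prod>i\<le>n. 1 - q ^ Suc i) = 1" for n
  proof -
    have e: "(\<Prod>i\<le>n. 1 - q ^ Suc i) = (\<Prod>m=1..Suc n. 1 - q ^ m)"
      using prod_Suc_shift[of "\<lambda>m. 1 - q ^ m" n] by simp
    show ?thesis using An_prod[OF q, of "Suc n"] unfolding e .
  qed
  ultimately have "(\<lambda>n. 1) \<longlonglongrightarrow> Pq q * (\<Prod>m. (1 - q ^ Suc m))" by simp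
  then show ?thesis using LIMSEQ_unique tendsto_const by blast
qed

definition sc :: "'a::comm_ring_1 \<Rightarrow> 'a fps \<Rightarrow> 'a fps" where
  "sc c F = Abs_fps (\<lambda>k. c^k * fps_nth F k)"

lemma sc_nth [simp]: "fps_nth (sc c F) k = c^k * fps_nth F k" by (simp add: sc_def)

lemma sc_mult: "sc c (F * G) = sc c F * sc c G"
proof (rule fps_ext)
  fix n
  have "fps_nth (sc c (F * G)) n = (\<Sum>i=0..n. c^n * (fps_nth F i * fps_nth G (n-i)))"
    by (simp add: fps_mult_nth sum_distrib_left)
  also have "\<dots> = (\<Sum>i=0..n. (c^i * fps_nth F i) * (c^(n-i) * fps_nth G (n-i)))"
  proof (rule sum.cong[OF refl])
    fix i assume "i \<in> {0..n}"
    then have "c^n = c^i * c^(n-i)" by (simp add: power_add[symmetric])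
    then show "c^n * (fps_nth F i * fps_nth G (n-i)) = (c^i * fps_nth F i) * (c^(n-i) * fps_nth G (n-i))" by (simp add: mult_ac)
  qed
  also have "\<dots> = fps_nth (sc c F * sc c G) n" by (simp add: fps_mult_nth)
  finally show "fps_nth (sc c (F * G)) n = fps_nth (sc c F * sc c G) n" .
qed

lemma sc_add: "sc c (F + G) = sc c F + sc c G" by (rule fps_ext) (simp add: algebra_simps)
lemma sc_diff: "sc c (F - G) = sc c F - sc c G" by (rule fps_ext) (simp add: algebra_simps)
lemma sc_1: "sc c 1 = 1" by (rule fps_ext) simp
lemma sc_const: "sc c (fps_const a) = fps_const a" by (rule fps_ext) simp
lemma sc_X: "sc c fps_X = fps_const c * fps_X" by (rule fps_ext) (simp add: fps_X_def)
lemma sc_exp: "sc c (fps_exp a) = fps_exp (c * (a :: 'a :: field))"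
  by (rule fps_ext) (simp add: power_mult_distrib)

definition Dc :: "complex fps" where "Dc = fps_shift 1 (fps_exp 1 - 1)"
definition Bc :: "complex fps" where "Bc = inverse Dc"
definition hh :: "complex fps" where "hh = fps_exp (1/2)"
definition hi :: "complex fps" where "hi = fps_exp (-1/2)"
definition W :: "complex fps" where "W = fps_const 2 * sc (1/2) Bc - Bc"

lemma Dc_0: "fps_nth Dc 0 = 1" by (simp add: Dc_def)

lemma Dc_X: "Dc * fps_X = fps_exp 1 - 1"
  by (rule fps_ext) (simp add: Dc_def)

lemma Bc_eq: "Bc * (fps_exp 1 - 1) = fps_X"
proof -
  have "Bc * (fps_exp 1 - 1) = (Bc * Dc) * fps_X" by (simp add: Dc_X[symmetric] mult.assoc)
  also have "Bc * Dc = 1" unfolding Bc_def by (rule inverse_mult_eq_1) (simp add: Dc_0)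
  finally show ?thesis by simp
qed

lemma hh_hh: "hh * hh = fps_exp 1"
  unfolding hh_def by (simp add: fps_exp_add_mult[symmetric])

lemma hh_hi: "hh * hi = 1"
  unfolding hh_def hi_def by (simp add: fps_exp_add_mult[symmetric])

lemma scB: "sc (1/2) Bc * (hh - 1) = fps_const (1/2) * fps_X"
proof -
  have "sc (1/2) (Bc * (fps_exp 1 - 1)) = sc (1/2) fps_X" by (simp only: Bc_eq)
  then show ?thesis by (simp add: sc_mult sc_diff sc_1 sc_exp sc_X hh_def)
qed

lemma W_eq: "W * (hh - hi) = fps_X"
proof -
  have e1: "(hh - 1) * (1 + hi) = hh - hi" using hh_hi by (simp add: algebra_simps)
  have e2: "(fps_exp 1 - 1) * hi = hh - hi"
    using hh_hi hh_hh[symmetric] by (simp add: algebra_simps)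
  have "W * (hh - hi) = fps_const 2 * (sc (1/2) Bc * ((hh - 1) * (1 + hi))) - Bc * ((fps_exp 1 - 1) * hi)"
    unfolding e1 e2 W_def by (simp add: algebra_simps)
  also have "\<dots> = fps_const 2 * ((sc (1/2) Bc * (hh - 1)) * (1 + hi)) - (Bc * (fps_exp 1 - 1)) * hi"
    by (simp add: mult.assoc)
  also have "\<dots> = fps_const 2 * (fps_const (1/2) * fps_X * (1 + hi)) - fps_X * hi"
    by (simp only: scB Bc_eq)
  also have "\<dots> = (fps_const 2 * fps_const (1/2)) * fps_X * (1 + hi) - fps_X * hi"
    by (simp add: mult.assoc)
  also have "fps_const 2 * fps_const (1/2) = (1 :: complex fps)"
    by (simp add: fps_const_mult[symmetric])
  finally show ?thesis by (simp add: algebra_simps)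
qed

lemma hh_hi_nz: "hh - hi \<noteq> 0"
proof
  assume "hh - hi = 0"
  then have "fps_nth (hh - hi) 1 = 0" by simp
  then show False by (simp add: hh_def hi_def)
qed

lemma W_even: "sc (-1) W = W"
proof -
  have "sc (-1) (W * (hh - hi)) = sc (-1) fps_X" by (simp only: W_eq)
  then have "sc (-1) W * (hi - hh) = - fps_X"
    by (simp add: sc_mult sc_diff sc_exp sc_X hh_def hi_def fps_const_neg[symmetric])
  then have "sc (-1) W * (hh - hi) = W * (hh - hi)"
    using W_eq by (simp add: algebra_simps)
  then show ?thesis using hh_hi_nz by simp
qed

lemma W_odd: "odd k \<Longrightarrow> fps_nth W k = 0"
proof -
  assume "odd k"
  have "fps_nth (sc (-1) W) k = fps_nth W k" by (simp only: W_even)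
  then have "- fps_nth W k = fps_nth W k" using \<open>odd k\<close> by simp
  then show ?thesis by simp
qed

definition Mr :: "real fps \<Rightarrow> complex fps" where "Mr F = Abs_fps (\<lambda>k. of_real (fps_nth F k))"

lemma Mr_nth [simp]: "fps_nth (Mr F) k = of_real (fps_nth F k)" by (simp add: Mr_def)

lemma Mr_mult: "Mr (F * G) = Mr F * Mr G"
  by (rule fps_ext) (simp add: fps_mult_nth)

lemma Mr_1: "Mr 1 = 1" by (rule fps_ext) simp

definition Dr :: "real fps" where "Dr = fps_shift 1 (fps_exp 1 - 1)"

lemma Mr_Dr: "Mr Dr = Dc"
  by (rule fps_ext) (simp add: Dr_def Dc_def)

lemma Bc_Mr: "Bc = Mr (inverse Dr)"
proof -
  have "inverse Dr * Dr = 1" by (rule inverse_mult_eq_1) (simp add: Dr_def)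
  then have "Mr (inverse Dr) * Dc = 1" using Mr_mult[of "inverse Dr" Dr] by (simp add: Mr_Dr Mr_1)
  then have "Dc * Mr (inverse Dr) = 1" by (simp add: mult.commute)
  then show ?thesis unfolding Bc_def by (rule fps_inverse_unique)
qed

lemma Bc_nth: "fps_nth Bc k = of_real (bernoulli_num k / fact k)"
  by (simp add: Bc_Mr bernoulli_num_def Dr_def)

lemma W_0: "fps_nth W 0 = 1"
  by (simp add: W_def Bc_nth bernoulli_num_def)

lemma W_Suc:
  assumes "n \<ge> 1"
  shows "fps_nth W (Suc n) = - of_real (if odd n then xi_neg n else 0) / fact n"
proof (cases "odd n")
  case False
  then have "odd (Suc n)" by simp
  then show ?thesis using False W_odd by simp
next
  case True
  have "fps_nth W (Suc n) = (2 * (1/2)^Suc n - 1) * fps_nth Bc (Suc n)" by (simp add: W_def algebra_simps)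
  also have "\<dots> = of_real (((1/2)^n - 1) * (bernoulli_num (Suc n) / fact (Suc n)))"
    by (simp add: Bc_nth)
  also have "((1/2::real)^n - 1) * (bernoulli_num (Suc n) / fact (Suc n)) = - xi_neg n / fact n"
  proof -
    have "2 powr (- real n) = (1/2::real)^n"
      by (simp add: powr_minus powr_realpow power_one_over inverse_eq_divide)
    moreover have "fact (Suc n) = (real n + 1) * (fact n :: real)" by simp
    ultimately show ?thesis
      unfolding xi_neg_def zeta_neg_def by (simp add: of_nat_Suc[symmetric] del: of_nat_Suc)
  qed
  finally show ?thesis using True by simp
qed

definition Ssinh :: "complex fls" where
  "Ssinh = fls_X_inv + fps_to_fls (Abs_fps (\<lambda>n. - of_real (if odd n then xi_neg n else 0) / fact n))"

lemma Ssinh_eq: "Ssinh = fls_X_inv * fps_to_fls W"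
proof (rule fls_eqI)
  fix k :: int
  show "fls_nth Ssinh k = fls_nth (fls_X_inv * fps_to_fls W) k"
  proof (cases "k \<ge> 0")
    case True
    then obtain n where n: "k = int n" by (metis nonneg_eq_int)
    show ?thesis
    proof (cases "n = 0")
      case True then show ?thesis using n W_odd[of 1] by (simp add: Ssinh_def fls_X_inv_times_conv_shift)
    next
      case False
      then have "fps_nth W (Suc n) = - of_real (if odd n then xi_neg n else 0) / fact n" using W_Suc by simp
      then show ?thesis using n False
        by (simp add: Ssinh_def fls_X_inv_times_conv_shift nat_add_distrib)
    qed
  next
    case False
    then show ?thesis using W_0
      by (cases "k = -1") (simp_all add: Ssinh_def fls_X_inv_times_conv_shift)
  qed
qed

lemma inverse_sinh: "inverse (fps_to_fls (hh - hi)) = Ssinh"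
proof (rule inverse_unique)
  have "fps_to_fls (hh - hi) * Ssinh = fls_X_inv * fps_to_fls (W * (hh - hi))"
    by (simp add: Ssinh_eq fls_times_fps_to_fls mult_ac)
  also have "\<dots> = 1" by (simp add: W_eq fls_X_inv_times_conv_shift fls_X_conv_shift_1)
  finally show "fps_to_fls (hh - hi) * Ssinh = 1" .
qed

lemma sinh_laurent: "(\<lambda>u. 1 / (exp (u/2) - exp (-u/2))) has_laurent_expansion Ssinh"
proof -
  have "(\<lambda>u. exp ((1/2) * u) - exp ((-1/2) * u)) has_fps_expansion (hh - hi)"
    unfolding hh_def hi_def by (intro fps_expansion_intros)
  then have "(\<lambda>u. exp ((1/2) * u) - exp ((-1/2) * u)) has_laurent_expansion fps_to_fls (hh - hi)"
    by (rule has_laurent_expansion_fps)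
  then have "(\<lambda>u. inverse (exp ((1/2) * u) - exp ((-1/2) * u))) has_laurent_expansion inverse (fps_to_fls (hh - hi))"
    by (rule has_laurent_expansion_inverse)
  then have "(\<lambda>u. inverse (exp ((1/2) * u) - exp ((-1/2) * u))) has_laurent_expansion Ssinh"
    by (simp only: inverse_sinh)
  moreover have "(\<lambda>u::complex. inverse (exp ((1/2) * u) - exp ((-1/2) * u))) = (\<lambda>u. 1 / (exp (u/2) - exp (-u/2)))"
  proof (rule ext)
    fix u :: complex
    have e1: "(1/2) * u = u/2" and e2: "(-1/2) * u = -u/2" by simp_all
    show "inverse (exp ((1/2) * u) - exp ((-1/2) * u)) = 1 / (exp (u/2) - exp (-u/2))"
      unfolding e1 e2 by (rule inverse_eq_divide)
  qed
  ultimately show ?thesis by (simp only:)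
qed

lemma norm_qexp_lt1: "Im \<tau> > 0 \<Longrightarrow> norm (qexp \<tau>) < 1"
  by (simp add: qexp_def)

lemma qexp_nz: "qexp \<tau> \<noteq> 0"
  by (simp add: qexp_def)

definition gB :: "real \<Rightarrow> real \<Rightarrow> nat list \<times> nat \<Rightarrow> real" where
  "gB a R = (\<lambda>(lam, n). a ^ psize lam * (2 * real (psize lam)) * (R * (real (psize lam) + 1))^n / fact n)"

lemma gB_summable:
  assumes a: "0 \<le> a" and R: "0 < R" and aR: "a * exp (2*R) < 1"
  shows "gB a R summable_on (partitions \<times> UNIV)"
proof -
  define h where "h = (\<lambda>lam. a ^ psize lam * (2 * real (psize lam)) * exp (R * (real (psize lam) + 1)))"
  have fib: "((\<lambda>n. gB a R (lam, n)) has_sum h lam) UNIV" for lam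
  proof -
    define s where "s = real (psize lam)"
    have "(\<lambda>n. (R*(s+1))^n /\<^sub>R fact n) sums exp (R*(s+1))" by (rule exp_converges)
    then have "(\<lambda>n. (R*(s+1))^n / fact n) sums exp (R*(s+1))" by (simp add: divide_inverse mult.commute)
    then have "(\<lambda>n. (a ^ psize lam * (2 * s)) * ((R*(s+1))^n / fact n)) sums ((a ^ psize lam * (2 * s)) * exp (R*(s+1)))"
      by (rule sums_mult)
    then have "(\<lambda>n. gB a R (lam, n)) sums h lam" by (simp add: gB_def h_def s_def)
    moreover have "gB a R (lam, n) \<ge> 0" for n using a R by (simp add: gB_def)
    ultimately show ?thesis by (rule sums_nonneg_imp_has_sum)
  qed
  define b where "b = a * exp (2*R)"
  have b: "0 \<le> b" "b < 1" using a aR by (auto simp: b_def)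
  define C where "C = 2 * exp R / R"
  have hle: "h lam \<le> C * b ^ psize lam" for lam
  proof -
    define s where "s = real (psize lam)"
    have s0: "s \<ge> 0" by (simp add: s_def)
    have "R * s \<le> exp (R * s)" using exp_ge_add_one_self[of "R * s"] by linarith
    then have ss: "s \<le> exp (R * s) / R" using R by (simp add: field_simps)
    have "h lam = 2 * exp R * a ^ psize lam * (s * exp (R * s))"
      by (simp add: h_def s_def[symmetric] exp_add[symmetric] distrib_left mult_ac)
    also have "\<dots> \<le> 2 * exp R * a ^ psize lam * (exp (R * s) / R * exp (R * s))"
      using ss a by (intro mult_left_mono mult_right_mono) auto
    also have "\<dots> = C * (a ^ psize lam * exp (2 * R * s))"
      by (simp add: C_def exp_add[symmetric] mult_ac)
    also have "exp (2 * R * s) = exp (2 * R) ^ psize lam"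
      by (simp add: s_def exp_of_nat_mult[symmetric] mult_ac)
    also have "a ^ psize lam * exp (2 * R) ^ psize lam = b ^ psize lam"
      by (simp add: b_def power_mult_distrib)
    finally show ?thesis .
  qed
  have hsum: "h summable_on partitions"
  proof (rule summable_on_comparison_test)
    show "(\<lambda>lam. C * b ^ psize lam) summable_on partitions"
      by (rule summable_on_cmult_right[OF summable_real[OF b]])
    show "\<And>x. x \<in> partitions \<Longrightarrow> h x \<le> C * b ^ psize x" using hle by blast
    show "\<And>x. x \<in> partitions \<Longrightarrow> 0 \<le> h x" using a R by (simp add: h_def)
  qed
  show ?thesis
    by (rule summable_on_SigmaI[OF fib hsum]) (use a R in \<open>auto simp: gB_def\<close>)
qed

definition Phi :: "complex \<Rightarrow> complex \<Rightarrow> nat list \<times> nat \<Rightarrow> complex" where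
  "Phi q u = (\<lambda>(lam, n). u ^ n / fact n * of_real (p_fun n lam) * q ^ psize lam)"

lemma Phi_summable:
  assumes R: "0 < R" and aR: "norm q * exp (2*R) < 1" and u: "norm u \<le> R"
  shows "Phi q u summable_on (partitions \<times> UNIV)"
proof -
  have "(\<lambda>x. norm (Phi q u x)) summable_on (partitions \<times> UNIV)"
  proof (rule summable_on_comparison_test)
    show "gB (norm q) R summable_on (partitions \<times> UNIV)"
      by (rule gB_summable[OF _ R aR]) simp
    show "\<And>x. 0 \<le> norm (Phi q u x)" by simp
    fix x assume x: "x \<in> partitions \<times> (UNIV :: nat set)"
    obtain lam n where xe: "x = (lam, n)" by fastforce
    have lam: "lam \<in> partitions" using x xe by auto
    define s where "s = real (psize lam)"
    have "norm (Phi q u x) = norm u ^ n / fact n * \<bar>p_fun n lam\<bar> * norm q ^ psize lam"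
      by (simp add: Phi_def xe norm_mult norm_divide norm_power)
    also have "\<dots> \<le> R ^ n / fact n * (2 * s * (s + 1)^n) * norm q ^ psize lam"
      using p_fun_bound[OF lam, of n] u R
      by (intro mult_right_mono mult_mono divide_right_mono power_mono) (auto simp: s_def)
    also have "\<dots> = gB (norm q) R x"
      by (simp add: gB_def xe s_def power_mult_distrib)
    finally show "norm (Phi q u x) \<le> gB (norm q) R x" .
  qed
  then show ?thesis by (simp add: summable_on_iff_abs_summable_on_complex)
qed

definition fl :: "complex \<Rightarrow> nat list \<Rightarrow> complex" where
  "fl u lam = (\<Sum>\<^sub>\<infinity>i\<in>{1::nat..}.
          exp (u * (of_nat (part lam i) - of_nat i + 1/2)) - exp (u * (- of_nat i + 1/2)))"

lemma fl_finite:
  "fl u lam = (\<Sum>i=1..length lam. exp (u * (of_nat (part lam i) - of_nat i + 1/2)) - exp (u * (- of_nat i + 1/2)))"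
proof -
  have "fl u lam = (\<Sum>\<^sub>\<infinity>i\<in>{1..length lam}.
          exp (u * (of_nat (part lam i) - of_nat i + 1/2)) - exp (u * (- of_nat i + 1/2)))"
    unfolding fl_def by (rule infsum_cong_neutral) (auto simp: part_def)
  then show ?thesis by simp
qed

lemma fl_sums:
  assumes lam: "lam \<in> partitions"
  shows "(\<lambda>n. u^n / fact n * of_real (p_fun n lam)) sums fl u lam"
proof -
  define X where "X = (\<lambda>i. of_nat (part lam i) - of_nat i + 1/2 :: complex)"
  define Y where "Y = (\<lambda>i::nat. - of_nat i + 1/2 :: complex)"
  have ex: "(\<lambda>n. (u * z)^n / fact n) sums exp (u * z)" for z :: complex
    using exp_converges[of "u * z"] by (simp add: scaleR_conv_of_real divide_inverse mult.commute)
  have "(\<lambda>n. \<Sum>i\<in>{1..length lam}. (u * X i)^n / fact n - (u * Y i)^n / fact n)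
        sums (\<Sum>i\<in>{1..length lam}. exp (u * X i) - exp (u * Y i))"
    by (intro sums_sum sums_diff ex)
  moreover have "(\<lambda>n. \<Sum>i\<in>{1..length lam}. (u * X i)^n / fact n - (u * Y i)^n / fact n)
      = (\<lambda>n. u^n / fact n * of_real (p_fun n lam))"
  proof (rule ext)
    fix n
    have "of_real (p_fun n lam) = (\<Sum>i\<in>{1..length lam}. X i ^ n - Y i ^ n)"
      unfolding p_fun_rows[OF lam] X_def Y_def by simp
    then show "(\<Sum>i\<in>{1..length lam}. (u * X i)^n / fact n - (u * Y i)^n / fact n)
        = u^n / fact n * of_real (p_fun n lam)"
      by (simp add: sum_distrib_left power_mult_distrib algebra_simps diff_divide_distrib)
  qed
  moreover have "(\<Sum>i\<in>{1..length lam}. exp (u * X i) - exp (u * Y i)) = fl u lam"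
    by (simp add: fl_finite X_def Y_def)
  ultimately show ?thesis by simp
qed

definition Tn :: "complex \<Rightarrow> nat \<Rightarrow> complex" where
  "Tn q n = (\<Sum>\<^sub>\<infinity>lam\<in>partitions. of_real (p_fun n lam) * q ^ psize lam)"

lemma numerator_sums:
  assumes R: "0 < R" and aR: "norm q * exp (2*R) < 1" and u: "norm u \<le> R"
  shows "(\<lambda>n. u^n / fact n * Tn q n) sums (\<Sum>\<^sub>\<infinity>lam\<in>partitions. fl u lam * q ^ psize lam)"
proof -
  have S: "Phi q u summable_on (partitions \<times> UNIV)" by (rule Phi_summable[OF R aR u])
  define H where "H = infsum (Phi q u) (partitions \<times> UNIV)"
  have HS: "(Phi q u has_sum H) (partitions \<times> UNIV)" using S by (simp add: H_def)
  have fib1: "((\<lambda>n. Phi q u (lam, n)) has_sum (fl u lam * q ^ psize lam)) UNIV" if lam: "lam \<in> partitions" for lam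
  proof -
    have s1: "(\<lambda>n. Phi q u (lam, n)) summable_on UNIV"
      using summable_on_SigmaD1[of "\<lambda>lam n. Phi q u (lam, n)" partitions "\<lambda>_. UNIV" lam] S lam by simp
    then have "((\<lambda>n. Phi q u (lam, n)) has_sum infsum (\<lambda>n. Phi q u (lam, n)) UNIV) UNIV" by simp
    then have "(\<lambda>n. Phi q u (lam, n)) sums infsum (\<lambda>n. Phi q u (lam, n)) UNIV" by (rule has_sum_imp_sums)
    moreover have "(\<lambda>n. Phi q u (lam, n)) sums (fl u lam * q ^ psize lam)"
      unfolding Phi_def using sums_mult2[OF fl_sums[OF lam, of u], of "q ^ psize lam"] by simp
    ultimately have "infsum (\<lambda>n. Phi q u (lam, n)) UNIV = fl u lam * q ^ psize lam" using sums_unique2 by blast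
    then show ?thesis using s1 by (metis has_sum_infsum)
  qed
  have num: "((\<lambda>lam. fl u lam * q ^ psize lam) has_sum H) partitions"
    by (rule has_sum_SigmaD[OF HS fib1])
  have HS': "((\<lambda>(n, lam). Phi q u (lam, n)) has_sum H) (UNIV \<times> partitions)"
    using HS by (subst (asm) has_sum_swap) simp
  have fib2: "((\<lambda>lam. Phi q u (lam, n)) has_sum (u^n / fact n * Tn q n)) partitions" for n
  proof -
    have s2: "(\<lambda>lam. Phi q u (lam, n)) summable_on partitions"
      using summable_on_SigmaD1[of "\<lambda>n lam. Phi q u (lam, n)" UNIV "\<lambda>_. partitions" n] HS'
      by (auto simp: summable_on_def)
    have "(\<lambda>lam. Phi q u (lam, n)) = (\<lambda>lam. (u^n / fact n) * (of_real (p_fun n lam) * q ^ psize lam))"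
      by (auto simp: Phi_def)
    then have "infsum (\<lambda>lam. Phi q u (lam, n)) partitions = u^n / fact n * Tn q n"
      unfolding Tn_def by (simp only: infsum_cmult_right')
    then show ?thesis using s2 by (metis has_sum_infsum)
  qed
  have "((\<lambda>n. u^n / fact n * Tn q n) has_sum H) UNIV"
    by (rule has_sum_SigmaD[OF HS'[unfolded case_prod_beta'] ]) (use fib2 in simp)
  then have "(\<lambda>n. u^n / fact n * Tn q n) sums H" by (rule has_sum_imp_sums)
  moreover have "(\<Sum>\<^sub>\<infinity>lam\<in>partitions. fl u lam * q ^ psize lam) = H" using num by (rule infsumI)
  ultimately show ?thesis by simp
qed

definition Pn :: "nat \<Rightarrow> nat list set" where
  "Pn n = {lam \<in> partitions. psize lam = n}"

lemma finite_Pn: "finite (Pn n)"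
proof (rule finite_subset)
  show "Pn n \<subseteq> {xs. set xs \<subseteq> {0..n} \<and> length xs \<le> n}"
  proof
    fix lam assume "lam \<in> Pn n"
    then have l: "lam \<in> partitions" "psize lam = n" by (auto simp: Pn_def)
    have "set lam \<subseteq> {0..n}" using l by (auto simp: psize_def member_le_sum_list)
    moreover have "length lam \<le> n" using length_le_psize[OF l(1)] l(2) by simp
    ultimately show "lam \<in> {xs. set xs \<subseteq> {0..n} \<and> length xs \<le> n}" by simp
  qed
  show "finite {xs. set xs \<subseteq> {0..n} \<and> length xs \<le> n}"
    by (rule finite_lists_length_le) simp
qed

lemma group_sums:
  fixes h :: "nat \<Rightarrow> complex"
  assumes S: "(\<lambda>lam. h (psize lam)) summable_on partitions"
  shows "(\<lambda>n. of_nat (card (Pn n)) * h n) sums (\<Sum>\<^sub>\<infinity>lam\<in>partitions. h (psize lam))"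
proof -
  define S0 where "S0 = (\<Sum>\<^sub>\<infinity>lam\<in>partitions. h (psize lam))"
  have "((\<lambda>lam. h (psize lam)) has_sum S0) partitions" using S by (simp add: S0_def)
  moreover have "((\<lambda>lam. h (psize lam)) has_sum S0) partitions = ((\<lambda>(n, lam). h n) has_sum S0) (Sigma UNIV Pn)"
    by (rule has_sum_reindex_bij_witness[where i = snd and j = "\<lambda>lam. (psize lam, lam)"])
       (auto simp: Pn_def)
  ultimately have H: "((\<lambda>(n, lam). h n) has_sum S0) (Sigma UNIV Pn)" by simp
  have "((\<lambda>n. of_nat (card (Pn n)) * h n) has_sum S0) UNIV"
    by (rule has_sum_SigmaD[OF H]) (simp add: finite_Pn)
  then show ?thesis unfolding S0_def by (rule has_sum_imp_sums)
qed

definition Pf :: "complex fps" where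
  "Pf = Abs_fps (\<lambda>n. of_nat (card (Pn n)))"

lemma Pf_sums:
  assumes q: "norm q < 1"
  shows "(\<lambda>n. fps_nth Pf n * q ^ n) sums Pq q"
  using group_sums[of "\<lambda>n. q ^ n"] summable_cpx[OF q order_refl] by (simp add: Pf_def Pq_def)

lemma Pq_eval: "norm q < 1 \<Longrightarrow> Pq q = eval_fps Pf q"
  using Pf_sums by (simp add: eval_fps_def sums_iff)

lemma Pf_radius:
  assumes q: "norm q < 1"
  shows "norm q < fps_conv_radius Pf"
proof -
  define r where "r = (1 + norm q) / 2"
  have r: "norm q < r" "r < 1" using q by (auto simp: r_def)
  have r0: "r \<ge> 0" using r(1) norm_ge_zero[of q] by linarith
  have "norm (complex_of_real r) < 1" using r r0 by simp
  then have "summable (\<lambda>n. fps_nth Pf n * complex_of_real r ^ n)"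
    using Pf_sums sums_summable by blast
  then have "conv_radius (fps_nth Pf) \<ge> norm (complex_of_real r)" by (rule conv_radius_geI)
  then have "fps_conv_radius Pf \<ge> ereal r" using r0 by (simp add: fps_conv_radius_def)
  moreover have "ereal (norm q) < ereal r" using r by simp
  ultimately show ?thesis by (meson less_le_trans)
qed

lemma choose_R:
  assumes q: "norm q < 1"
  obtains R where "R > 0" "norm q * exp (2 * R) < 1"
proof -
  define a where "a = norm q"
  define x where "x = (1 - a) / 2"
  have a: "0 \<le> a" "a < 1" using q by (auto simp: a_def)
  have x: "0 < x" "x < 1" using a by (auto simp: x_def)
  have "exp x * exp (-x) = 1" by (simp add: exp_minus)
  moreover have "1 - x \<le> exp (-x)" using exp_ge_add_one_self[of "-x"] by simp
  moreover have "1 - x > 0" using x by simp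
  ultimately have "exp x * (1 - x) \<le> 1" by (metis exp_gt_zero less_eq_real_def mult_left_mono)
  then have ex: "exp x \<le> 1 / (1 - x)" using x by (simp add: field_simps)
  have "a * exp x \<le> a * (1 / (1 - x))" using ex a by (intro mult_left_mono) auto
  also have "\<dots> < 1" using a by (simp add: x_def field_simps)
  finally have "a * exp (2 * (x / 2)) < 1" by simp
  then show ?thesis using that[of "x/2"] x by (simp add: a_def)
qed

lemma Tn_summable:
  fixes q :: complex
  assumes q: "norm q < 1"
  shows "(\<lambda>lam. of_real (p_fun n lam) * q ^ psize lam) summable_on partitions"
proof -
  obtain R where R: "R > 0" "norm q * exp (2 * R) < 1" using choose_R[OF q] by blast
  have S: "Phi q (of_real R) summable_on (partitions \<times> UNIV)"
    by (rule Phi_summable[OF R]) (use R in simp)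
  have "(\<lambda>lam. Phi q (of_real R) (lam, n)) summable_on partitions"
  proof -
    have "(\<lambda>(n, lam). Phi q (of_real R) (lam, n)) summable_on (UNIV \<times> partitions)"
      using S by (subst (asm) summable_on_swap) simp
    then show ?thesis
      using summable_on_SigmaD1[of "\<lambda>n lam. Phi q (of_real R) (lam, n)" UNIV "\<lambda>_. partitions" n] by simp
  qed
  moreover have "(\<lambda>lam. Phi q (of_real R) (lam, n))
      = (\<lambda>lam. (of_real R ^ n / fact n) * (of_real (p_fun n lam) * q ^ psize lam))"
    by (auto simp: Phi_def)
  ultimately have "(\<lambda>lam. (of_real R ^ n / fact n) * (of_real (p_fun n lam) * q ^ psize lam)) summable_on partitions"
    by simp
  moreover have "(of_real R ^ n / fact n :: complex) \<noteq> 0" using R by simp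
  ultimately show ?thesis using summable_on_cmult_right' by blast
qed

lemma T1_eq:
  assumes q: "norm q < 1" "q \<noteq> 0"
  shows "eval_fps (fps_deriv Pf) q = Tn q 1 / q"
proof -
  have T1: "Tn q 1 = (\<Sum>\<^sub>\<infinity>lam\<in>partitions. of_nat (psize lam) * q ^ psize lam)"
    unfolding Tn_def by (rule infsum_cong) (subst p_fun_1, auto)
  have "(\<lambda>lam. of_real (p_fun 1 lam) * q ^ psize lam) summable_on partitions"
    by (rule Tn_summable[OF q(1)])
  then have "(\<lambda>lam. of_nat (psize lam) * q ^ psize lam) summable_on partitions"
    by (rule summable_on_cong[THEN iffD1, rotated]) (subst p_fun_1, auto)
  then have "(\<lambda>n. of_nat (card (Pn n)) * (of_nat n * q ^ n)) sums Tn q 1"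
    unfolding T1 by (rule group_sums[of "\<lambda>n. of_nat n * q ^ n"])
  then have "(\<lambda>n. of_nat (card (Pn (Suc n))) * (of_nat (Suc n) * q ^ Suc n)) sums Tn q 1"
    by (subst sums_Suc_iff) simp
  then have "(\<lambda>n. of_nat (card (Pn (Suc n))) * (of_nat (Suc n) * q ^ Suc n) / q) sums (Tn q 1 / q)"
    by (rule sums_divide)
  moreover have "(\<lambda>n. of_nat (card (Pn (Suc n))) * (of_nat (Suc n) * q ^ Suc n) / q)
      = (\<lambda>n. fps_nth (fps_deriv Pf) n * q ^ n)"
    using q by (auto simp: Pf_def)
  ultimately show ?thesis by (simp add: eval_fps_def sums_iff)
qed

lemma bernoulli_2: "bernoulli_num 2 = 1/6"
proof -
  define D where "D = fps_shift 1 (fps_exp (1::real) - 1)"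
  define b where "b = inverse D"
  have "b * D = 1" unfolding b_def by (rule inverse_mult_eq_1) (simp add: D_def)
  then have e0: "fps_nth (b * D) 0 = 1" and e1: "fps_nth (b * D) 1 = 0" and e2: "fps_nth (b * D) 2 = 0"
    by simp_all
  have d: "fps_nth D k = 1 / fact (Suc k)" for k by (simp add: D_def algebra_simps)
  have s2: "(\<Sum>i::nat=0..2. f i) = f 0 + f 1 + (f 2 :: real)" for f
    by (simp add: numeral_2_eq_2)
  have b0: "fps_nth b 0 = 1" using e0 d[of 0] by (simp add: fps_mult_nth)
  have b1: "fps_nth b 1 = -1/2" using e1 b0 d[of 0] d[of 1] by (simp add: fps_mult_nth)
  have "fps_nth b 0 * fps_nth D 2 + fps_nth b 1 * fps_nth D 1 + fps_nth b 2 * fps_nth D 0 = 0"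
    using e2 by (simp add: fps_mult_nth s2)
  then have "fps_nth b 2 = 1/12" using b0 b1 d[of 0] d[of 1] d[of 2]
    by (simp add: numeral_2_eq_2 fact_Suc)
  moreover have "bernoulli_num 2 = fact 2 * fps_nth b 2"
    unfolding bernoulli_num_def b_def D_def by (rule refl)
  ultimately show ?thesis by simp
qed

lemma xi_neg_1: "xi_neg 1 = 1/24"
proof -
  have "bernoulli_num (Suc (Suc 0)) = 1/6" using bernoulli_2 by (simp add: numeral_2_eq_2)
  then show ?thesis by (simp add: xi_neg_def zeta_neg_def)
qed

definition e1 :: "complex \<Rightarrow> complex" where
  "e1 \<tau> = exp (complex_of_real (2 * pi) * \<i> * complex_of_real (- xi_neg 1) * \<tau>)"

lemma qpow:
  assumes lam: "lam \<in> partitions"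
  shows "exp (complex_of_real (2 * pi) * \<i> * complex_of_real (p_fun 1 lam) * \<tau>) = qexp \<tau> ^ psize lam"
proof -
  have "qexp \<tau> ^ psize lam = exp (of_nat (psize lam) * (complex_of_real (2 * pi) * \<i> * \<tau>))"
    unfolding qexp_def by (simp add: exp_of_nat_mult)
  then show ?thesis unfolding p_fun_1[OF lam] by (simp add: mult_ac)
qed

lemma V1_eq: "V1 \<tau> = e1 \<tau> * Pq (qexp \<tau>)"
proof -
  have "V1 \<tau> = (\<Sum>\<^sub>\<infinity>lam\<in>partitions. e1 \<tau> * qexp \<tau> ^ psize lam)"
    unfolding V1_def e1_def by (rule infsum_cong) (simp only: qpow)
  also have "\<dots> = e1 \<tau> * Pq (qexp \<tau>)" unfolding Pq_def by (rule infsum_cmult_right')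
  finally show ?thesis .
qed

lemma eta_V1:
  assumes "Im \<tau> > 0"
  shows "eta \<tau> * V1 \<tau> = 1"
proof -
  have q: "norm (qexp \<tau>) < 1" using assms by (rule norm_qexp_lt1)
  have "exp (complex_of_real (2 * pi) * \<i> * \<tau> / 24) * e1 \<tau> = 1"
    unfolding e1_def xi_neg_1 by (simp add: exp_add[symmetric] algebra_simps)
  moreover have "Pq (qexp \<tau>) * (\<Prod>m. 1 - qexp \<tau> ^ Suc m) = 1" by (rule euler_prod[OF q])
  moreover have "eta \<tau> * V1 \<tau> = (exp (complex_of_real (2 * pi) * \<i> * \<tau> / 24) * e1 \<tau>)
      * (Pq (qexp \<tau>) * (\<Prod>m. 1 - qexp \<tau> ^ Suc m))"
    unfolding eta_def V1_eq by (simp only: mult_ac)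
  ultimately show ?thesis by (simp only: mult_1)
qed

lemma Pq_nz: "Im \<tau> > 0 \<Longrightarrow> Pq (qexp \<tau>) \<noteq> 0"
  using euler_prod[OF norm_qexp_lt1] by force

lemma V1_deriv:
  assumes tau: "Im \<tau> > 0"
  shows "deriv V1 \<tau> = e1 \<tau> * (complex_of_real (2 * pi) * \<i>)
            * (Tn (qexp \<tau>) 1 - complex_of_real (xi_neg 1) * Pq (qexp \<tau>))"
proof -
  define c where "c = complex_of_real (2 * pi) * \<i> * complex_of_real (- xi_neg 1)"
  define w where "w = complex_of_real (2 * pi) * \<i>"
  define g where "g = (\<lambda>t. exp (c * t) * eval_fps Pf (qexp t))"
  define q where "q = qexp \<tau>"
  have q: "norm q < 1" "q \<noteq> 0" using norm_qexp_lt1[OF tau] qexp_nz by (auto simp: q_def)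
  have dq: "(qexp has_field_derivative (w * qexp \<tau>)) (at \<tau>)"
    unfolding qexp_def w_def by (auto intro!: derivative_eq_intros)
  have dP: "(eval_fps Pf has_field_derivative eval_fps (fps_deriv Pf) q) (at q)"
    by (rule has_field_derivative_eval_fps) (use Pf_radius[OF q(1)] in simp)
  have dPq: "((\<lambda>t. eval_fps Pf (qexp t)) has_field_derivative eval_fps (fps_deriv Pf) q * (w * q)) (at \<tau>)"
    using DERIV_chain2[OF dP[unfolded q_def] dq] by (simp add: q_def)
  have de: "((\<lambda>t. exp (c * t)) has_field_derivative (c * exp (c * \<tau>))) (at \<tau>)"
    by (auto intro!: derivative_eq_intros)
  have dg: "(g has_field_derivative (c * exp (c * \<tau>) * eval_fps Pf q + eval_fps (fps_deriv Pf) q * (w * q) * exp (c * \<tau>))) (at \<tau>)"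
    unfolding g_def using DERIV_mult[OF de dPq] by (simp add: q_def)
  have "(V1 has_field_derivative (c * exp (c * \<tau>) * eval_fps Pf q + eval_fps (fps_deriv Pf) q * (w * q) * exp (c * \<tau>))) (at \<tau>)"
  proof (rule has_field_derivative_transform_within_open[OF dg])
    show "open {z. Im z > 0}" by (rule open_halfspace_Im_gt)
    show "\<tau> \<in> {z. Im z > 0}" using tau by simp
    fix x assume "x \<in> {z. Im z > 0}"
    then have "norm (qexp x) < 1" by (simp add: norm_qexp_lt1)
    then show "g x = V1 x" unfolding g_def V1_eq e1_def c_def by (simp add: Pq_eval)
  qed
  then have "deriv V1 \<tau> = c * exp (c * \<tau>) * eval_fps Pf q + eval_fps (fps_deriv Pf) q * (w * q) * exp (c * \<tau>)"
    by (rule DERIV_imp_deriv)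
  also have "eval_fps (fps_deriv Pf) q * (w * q) = w * Tn q 1"
    using T1_eq[OF q] q(2) by simp
  also have "eval_fps Pf q = Pq q" using Pq_eval[OF q(1)] by simp
  also have "exp (c * \<tau>) = e1 \<tau>" by (simp add: e1_def c_def)
  finally show ?thesis by (simp add: c_def w_def q_def algebra_simps)
qed

lemma dV_eq:
  assumes tau: "Im \<tau> > 0" and n: "n \<ge> 1"
  shows "dV n \<tau> = e1 \<tau> * (complex_of_real (2 * pi) * \<i>)
            * (Tn (qexp \<tau>) n - complex_of_real (if odd n then xi_neg n else 0) * Pq (qexp \<tau>))"
proof (cases "n = 1")
  case True
  then show ?thesis using V1_deriv[OF tau] by (simp add: dV_def)
next
  case False
  define q where "q = qexp \<tau>"
  define x where "x = complex_of_real (if odd n then xi_neg n else 0)"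
  define w where "w = complex_of_real (2 * pi) * \<i>"
  have q: "norm q < 1" using norm_qexp_lt1[OF tau] by (simp add: q_def)
  have "dV n \<tau> = (\<Sum>\<^sub>\<infinity>lam\<in>partitions. (e1 \<tau> * w) * (complex_of_real (p_fun n lam) * q ^ psize lam
                    + (- x) * q ^ psize lam))"
    unfolding dV_def V_line_def using False
  proof (simp only: if_False fps_nth_Abs_fps, intro infsum_cong)
    fix lam assume lam: "lam \<in> partitions"
    show "fps_nth (fps_const (exp (complex_of_real (2 * pi) * \<i> * complex_of_real (- xi_neg 1) * \<tau>) *
             exp (complex_of_real (2 * pi) * \<i> * complex_of_real (p_fun 1 lam) * \<tau>)) *
           fps_exp (complex_of_real (2 * pi) * \<i> * complex_of_real (p_fun n lam - (if odd n then xi_neg n else 0)))) 1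
        = (e1 \<tau> * w) * (complex_of_real (p_fun n lam) * q ^ psize lam + (- x) * q ^ psize lam)"
      unfolding qpow[OF lam] by (simp add: e1_def w_def x_def q_def algebra_simps)
  qed
  also have "\<dots> = (e1 \<tau> * w) * (Tn q n + (- x) * Pq q)"
  proof -
    have s1: "(\<lambda>lam. complex_of_real (p_fun n lam) * q ^ psize lam) summable_on partitions"
      by (rule Tn_summable[OF q])
    have s2: "(\<lambda>lam. (- x) * q ^ psize lam) summable_on partitions"
      by (rule summable_on_cmult_right[OF summable_cpx[OF q order_refl]])
    show ?thesis
      unfolding Tn_def Pq_def
      by (simp only: infsum_cmult_right' infsum_add[OF s1 s2])
  qed
  finally show ?thesis by (simp add: q_def x_def w_def)
qed

definition Gc :: "complex \<Rightarrow> complex fps" where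
  "Gc q = Abs_fps (\<lambda>n. Tn q n / (fact n * Pq q))"

lemma Gc_sums:
  assumes R: "0 < R" "norm q * exp (2*R) < 1" and u: "norm u \<le> R"
  shows "(\<lambda>n. fps_nth (Gc q) n * u ^ n) sums qbracket q (fl u)"
proof -
  have "(\<lambda>n. u^n / fact n * Tn q n / Pq q) sums ((\<Sum>\<^sub>\<infinity>lam\<in>partitions. fl u lam * q ^ psize lam) / Pq q)"
    by (rule sums_divide[OF numerator_sums[OF R u]])
  moreover have "(\<lambda>n. u^n / fact n * Tn q n / Pq q) = (\<lambda>n. fps_nth (Gc q) n * u ^ n)"
    by (rule ext) (simp add: Gc_def divide_inverse mult_ac)
  moreover have "(\<Sum>\<^sub>\<infinity>lam\<in>partitions. fl u lam * q ^ psize lam) / Pq q = qbracket q (fl u)"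
    by (simp add: qbracket_def Pq_def)
  ultimately show ?thesis by simp
qed

lemma Gc_expansion:
  assumes tau: "Im \<tau> > 0"
  shows "(\<lambda>u. qbracket (qexp \<tau>) (fl u)) has_fps_expansion Gc (qexp \<tau>)"
proof -
  define q where "q = qexp \<tau>"
  have q: "norm q < 1" using norm_qexp_lt1[OF tau] by (simp add: q_def)
  obtain R where R: "R > 0" "norm q * exp (2 * R) < 1" using choose_R[OF q] by blast
  have "summable (\<lambda>n. fps_nth (Gc q) n * complex_of_real R ^ n)"
    using Gc_sums[OF R, of "complex_of_real R"] R(1) sums_summable by auto
  then have "conv_radius (fps_nth (Gc q)) \<ge> norm (complex_of_real R)" by (rule conv_radius_geI)
  then have "fps_conv_radius (Gc q) \<ge> ereal R" using R(1) by (simp add: fps_conv_radius_def)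
  moreover have "0 < ereal R" using R(1) by simp
  ultimately have rad: "fps_conv_radius (Gc q) > 0" by (meson less_le_trans)
  have ev: "eventually (\<lambda>u. eval_fps (Gc q) u = qbracket q (fl u)) (nhds 0)"
    using eventually_nhds_ball[OF R(1), of 0]
  proof eventually_elim
    case (elim u)
    then have "norm u \<le> R" by (simp add: dist_norm)
    then show ?case using Gc_sums[OF R] by (simp add: eval_fps_def sums_iff)
  qed
  show ?thesis using rad ev by (simp add: has_fps_expansion_def q_def)
qed

lemma Tn_0: "Tn q 0 = 0"
  by (simp add: Tn_def)

theorem proposition5p2:
  fixes \<tau>1 :: complex
  assumes "Im \<tau>1 > 0"
  shows "laurent_expansion (F_exp \<tau>1) 0 = delta_V \<tau>1"
proof -
  have Fe: "F_exp \<tau>1 = (\<lambda>u. 1 / (exp (u/2) - exp (-u/2)) + qbracket (qexp \<tau>1) (fl u))"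
    by (rule ext) (simp only: F_exp_def fl_def[abs_def])
  have L: "F_exp \<tau>1 has_laurent_expansion (Ssinh + fps_to_fls (Gc (qexp \<tau>1)))"
    unfolding Fe by (intro has_laurent_expansion_add sinh_laurent has_laurent_expansion_fps Gc_expansion assms)
  have "laurent_expansion (F_exp \<tau>1) 0 = Ssinh + fps_to_fls (Gc (qexp \<tau>1))"
    by (rule laurent_expansion_0_eqI[OF L])
  also have "\<dots> = delta_V \<tau>1"
  proof (rule fls_eqI)
    fix k :: int
    define q where "q = qexp \<tau>1"
    define P where "P = Pq q"
    define w where "w = complex_of_real (2 * pi) * \<i>"
    have Pnz: "P \<noteq> 0" using Pq_nz[OF assms] by (simp add: P_def q_def)
    have wnz: "w \<noteq> 0" by (simp add: w_def)
    have etaV: "eta \<tau>1 * V1 \<tau>1 = 1" by (rule eta_V1[OF assms])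
    have he: "eta \<tau>1 * e1 \<tau>1 = 1 / P"
      using etaV Pnz unfolding V1_eq by (simp add: P_def q_def field_simps)
    show "fls_nth (Ssinh + fps_to_fls (Gc (qexp \<tau>1))) k = fls_nth (delta_V \<tau>1) k"
    proof (cases "k \<ge> 0")
      case True
      then obtain n where n: "k = int n" by (metis nonneg_eq_int)
      show ?thesis
      proof (cases "n = 0")
        case True
        then show ?thesis using n by (simp add: Ssinh_def delta_V_def Gc_def Tn_0)
      next
        case False
        then have n1: "n \<ge> 1" by simp
        define x where "x = complex_of_real (if odd n then xi_neg n else 0)"
        have "eta \<tau>1 * dV n \<tau>1 / (w * fact n) = (eta \<tau>1 * e1 \<tau>1) * w * (Tn q n - x * P) / (w * fact n)"
          using dV_eq[OF assms n1] by (simp add: x_def P_def q_def w_def mult_ac)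
        also have "\<dots> = - x / fact n + Tn q n / (fact n * P)"
          unfolding he using Pnz wnz by (simp add: field_simps)
        finally have e: "eta \<tau>1 * dV n \<tau>1 / (w * fact n) = - x / fact n + Tn q n / (fact n * P)" .
        show ?thesis using n False e
          by (simp add: Ssinh_def delta_V_def Gc_def x_def P_def q_def w_def)
      qed
    next
      case False
      then show ?thesis using etaV
        by (cases "k = -1") (simp_all add: Ssinh_def delta_V_def)
    qed
  qed
  finally show ?thesis .
qed

end
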